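(* For all prefixes $p,p'$ there is at most one prefix $p''$ such that $p \cdot p' \sim p''$. If $s$ is a stream type with $p : s$, and $s'$ is the (unique) stream type with $\delta_p s \sim s'$, and $p' : s'$, then such a $p''$ exists and satisfies: (1) $p'' : s$, and (2) the derivative of $s$ by $p''$ equals the derivative of $s'$ by $p'$, i.e. for the unique types with $\delta_{p''} s \sim u$ and $\delta_{p'} s' \sim u'$ we have $u = u'$.
   Context: Stream types are generated by $s,t ::= 1 \mid \varepsilon \mid s\cdot t \mid s\,\|\,t \mid s+t \mid s^\star$. Prefixes are generated by $p ::= \mathtt{oneEmp} \mid \mathtt{oneFull} \mid \mathtt{epsEmp} \mid \mathtt{par}(p,p') \mid \mathtt{catA}(p) \mid \mathtt{catB}(p,p') \mid \mathtt{sumEmp} \mid \mathtt{inl}(p) \mid \mathtt{inr}(p) \mid \mathtt{starEmp} \mid \mathtt{starDone} \mid \mathtt{stA}(p) \mid \mathtt{stB}(p,p')$. Maximality (inductive): $\mathtt{epsEmp}$, $\mathtt{oneFull}$, $\mathtt{starDone}$ are maximal; $\mathtt{par}(p_1,p_2)$, $\mathtt{catB}(p_1,p_2)$, $\mathtt{stB}(p_1,p_2)$ are maximal if $p_1$ and $p_2$ are; $\mathtt{inl}(p)$, $\mathtt{inr}(p)$ are maximal if $p$ is. Prefix typing $p : s$ (inductive): $\mathtt{epsEmp}:\varepsilon$; $\mathtt{oneEmp}:1$; $\mathtt{oneFull}:1$; $\mathtt{par}(p_1,p_2): s\|t$ if $p_1:s$, $p_2:t$; $\mathtt{catA}(p):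 s\cdot t$ if $p:s$; $\mathtt{catB}(p_1,p_2): s\cdot t$ if $p_1:s$, $p_1$ maximal, $p_2:t$; $\mathtt{sumEmp}: s+t$; $\mathtt{inl}(p):s+t$ if $p:s$; $\mathtt{inr}(p):s+t$ if $p:t$; $\mathtt{starEmp}:s^\star$; $\mathtt{starDone}:s^\star$; $\mathtt{stA}(p):s^\star$ if $p:s$; $\mathtt{stB}(p,p'):s^\star$ if $p:s$, $p$ maximal, $p':s^\star$. Derivative relation $\delta_p s \sim s'$ (inductive): $\delta_{\mathtt{epsEmp}}\varepsilon\sim\varepsilon$; $\delta_{\mathtt{oneEmp}}1\sim 1$; $\delta_{\mathtt{oneFull}}1\sim\varepsilon$; $\delta_{\mathtt{par}(p_1,p_2)}(s\|t)\sim s'\|t'$ if $\delta_{p_1}s\sim s'$, $\delta_{p_2}t\sim t'$; $\delta_{\mathtt{catA}(p)}(s\cdot t)\sim s'\cdot t$ if $\delta_p s\sim s'$; $\delta_{\mathtt{catB}(p_1,p_2)}(s\cdot t)\sim t'$ if $\delta_{p_2}t\sim t'$; $\delta_{\mathtt{sumEmp}}(s+t)\sim s+t$; $\delta_{\mathtt{inl}(p)}(s+t)\sim s'$ if $\delta_p s\sim s'$; $\delta_{\mathtt{inr}(p)}(s+t)\sim t'$ if $\delta_p t\sim t'$; $\delta_{\mathtt{starEmp}}s^\star\sim s^\star$; $\delta_{\mathtt{starDone}}s^\star\sim\varepsilon$; $\delta_{\mathtt{stA}(p)}s^\star\sim s'\cdot s^\star$ if $\delta_p s\sim s'$; $\delta_{\mathtt{stB}(p,p')}s^\star\sim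 s'$ if $\delta_{p'}s^\star\sim s'$. (For $p:s$ such $s'$ exists and is unique.) Prefix concatenation $p\cdot p'\sim p''$ (inductive): $\mathtt{epsEmp}\cdot\mathtt{epsEmp}\sim\mathtt{epsEmp}$; $\mathtt{oneEmp}\cdot p\sim p$ whenever $p:1$; $\mathtt{oneFull}\cdot\mathtt{epsEmp}\sim\mathtt{oneFull}$; $\mathtt{par}(p_1,p_2)\cdot\mathtt{par}(p_1',p_2')\sim\mathtt{par}(p_1'',p_2'')$ if $p_i\cdot p_i'\sim p_i''$ for $i=1,2$; $\mathtt{catA}(p)\cdot\mathtt{catA}(p')\sim\mathtt{catA}(p'')$ if $p\cdot p'\sim p''$; $\mathtt{catA}(p)\cdot\mathtt{catB}(p',q)\sim\mathtt{catB}(p'',q)$ if $p\cdot p'\sim p''$; $\mathtt{catB}(p,p')\cdot p''\sim\mathtt{catB}(p,p''')$ if $p'\cdot p''\sim p'''$; $\mathtt{sumEmp}\cdot p\sim p$; $\mathtt{inl}(p)\cdot p'\sim\mathtt{inl}(p'')$ if $p\cdot p'\sim p''$; $\mathtt{inr}(p)\cdot p'\sim\mathtt{inr}(p'')$ if $p\cdot p'\sim p''$; $\mathtt{starEmp}\cdot p\sim p$; $\mathtt{starDone}\cdot\mathtt{epsEmp}\sim\mathtt{starDone}$; $\mathtt{stA}(p)\cdot\mathtt{catA}(p')\sim\mathtt{stA}(p'')$ if $p\cdot p'\sim p''$; $\mathtt{stA}(p)\cdot\mathtt{catB}(p',q)\sim\mathtt{stB}(p'',q)$ if $p\cdot p'\sim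 p''$; $\mathtt{stB}(p,p')\cdot p''\sim\mathtt{stB}(p,p''')$ if $p'\cdot p''\sim p'''$. *)

theory Defs
  imports Main
begin

datatype stype = One | Eps | Cat stype stype | Par stype stype | Sum stype stype | Star stype

datatype prefix = OneEmp | OneFull | EpsEmp | PPar prefix prefix | CatA prefix | CatB prefix prefix
  | SumEmp | Inl prefix | Inr prefix | StarEmp | StarDone | StA prefix | StB prefix prefix

inductive maximal :: "prefix \<Rightarrow> bool" where
  "maximal EpsEmp"
| "maximal OneFull"
| "maximal StarDone"
| "maximal p1 \<Longrightarrow> maximal p2 \<Longrightarrow> maximal (PPar p1 p2)"
| "maximal p1 \<Longrightarrow> maximal p2 \<Longrightarrow> maximal (CatB p1 p2)"
| "maximal p1 \<Longrightarrow> maximal p2 \<Longrightarrow> maximal (StB p1 p2)"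
| "maximal p \<Longrightarrow> maximal (Inl p)"
| "maximal p \<Longrightarrow> maximal (Inr p)"

inductive has_type :: "prefix \<Rightarrow> stype \<Rightarrow> bool" where
  "has_type EpsEmp Eps"
| "has_type OneEmp One"
| "has_type OneFull One"
| "has_type p1 s \<Longrightarrow> has_type p2 t \<Longrightarrow> has_type (PPar p1 p2) (Par s t)"
| "has_type p s \<Longrightarrow> has_type (CatA p) (Cat s t)"
| "has_type p1 s \<Longrightarrow> maximal p1 \<Longrightarrow> has_type p2 t \<Longrightarrow> has_type (CatB p1 p2) (Cat s t)"
| "has_type SumEmp (Sum s t)"
| "has_type p s \<Longrightarrow> has_type (Inl p) (Sum s t)"
| "has_type p t \<Longrightarrow> has_type (Inr p) (Sum s t)"
| "has_type StarEmp (Star s)"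
| "has_type StarDone (Star s)"
| "has_type p s \<Longrightarrow> has_type (StA p) (Star s)"
| "has_type p s \<Longrightarrow> maximal p \<Longrightarrow> has_type p' (Star s) \<Longrightarrow> has_type (StB p p') (Star s)"

inductive deriv :: "prefix \<Rightarrow> stype \<Rightarrow> stype \<Rightarrow> bool" where
  "deriv EpsEmp Eps Eps"
| "deriv OneEmp One One"
| "deriv OneFull One Eps"
| "deriv p1 s s' \<Longrightarrow> deriv p2 t t' \<Longrightarrow> deriv (PPar p1 p2) (Par s t) (Par s' t')"
| "deriv p s s' \<Longrightarrow> deriv (CatA p) (Cat s t) (Cat s' t)"
| "deriv p2 t t' \<Longrightarrow> deriv (CatB p1 p2) (Cat s t) t'"
| "deriv SumEmp (Sum s t) (Sum s t)"
| "deriv p s s' \<Longrightarrow> deriv (Inl p) (Sum s t) s'"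
| "deriv p t t' \<Longrightarrow> deriv (Inr p) (Sum s t) t'"
| "deriv StarEmp (Star s) (Star s)"
| "deriv StarDone (Star s) Eps"
| "deriv p s s' \<Longrightarrow> deriv (StA p) (Star s) (Cat s' (Star s))"
| "deriv p' (Star s) s' \<Longrightarrow> deriv (StB p p') (Star s) s'"

inductive pconcat :: "prefix \<Rightarrow> prefix \<Rightarrow> prefix \<Rightarrow> bool" where
  "pconcat EpsEmp EpsEmp EpsEmp"
| "has_type p One \<Longrightarrow> pconcat OneEmp p p"
| "pconcat OneFull EpsEmp OneFull"
| "pconcat p1 p1' p1'' \<Longrightarrow> pconcat p2 p2' p2'' \<Longrightarrow> pconcat (PPar p1 p2) (PPar p1' p2') (PPar p1'' p2'')"
| "pconcat p p' p'' \<Longrightarrow> pconcat (CatA p) (CatA p') (CatA p'')"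
| "pconcat p p' p'' \<Longrightarrow> pconcat (CatA p) (CatB p' q) (CatB p'' q)"
| "pconcat p' p'' p''' \<Longrightarrow> pconcat (CatB p p') p'' (CatB p p''')"
| "pconcat SumEmp p p"
| "pconcat p p' p'' \<Longrightarrow> pconcat (Inl p) p' (Inl p'')"
| "pconcat p p' p'' \<Longrightarrow> pconcat (Inr p) p' (Inr p'')"
| "pconcat StarEmp p p"
| "pconcat StarDone EpsEmp StarDone"
| "pconcat p p' p'' \<Longrightarrow> pconcat (StA p) (CatA p') (StA p'')"
| "pconcat p p' p'' \<Longrightarrow> pconcat (StA p) (CatB p' q) (StB p'' q)"
| "pconcat p' p'' p''' \<Longrightarrow> pconcat (StB p p') p'' (StB p p''')"

end

theory Submission
  imports Defs
begin
declare maximal.intros[intro] has_type.intros[intro] deriv.intros[intro] pconcat.intros[intro]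
inductive_cases mE: "maximal (CatA p)" "maximal (CatB p q)" "maximal (PPar p q)" "maximal (StA p)"
  "maximal (StB p q)" "maximal (Inl p)" "maximal (Inr p)" "maximal OneEmp" "maximal SumEmp" "maximal StarEmp"
inductive_cases htE: "has_type p Eps" "has_type p One" "has_type p (Cat s t)"
  "has_type p (Par s t)" "has_type p (Sum s t)" "has_type p (Star s)"

inductive_cases dE: "deriv EpsEmp s u" "deriv OneEmp s u" "deriv OneFull s u" "deriv (PPar p q) s u"
  "deriv (CatA p) s u" "deriv (CatB p q) s u" "deriv SumEmp s u" "deriv (Inl p) s u" "deriv (Inr p) s u"
  "deriv StarEmp s u" "deriv StarDone s u" "deriv (StA p) s u" "deriv (StB p q) s u"
inductive_cases cE: "pconcat EpsEmp q u" "pconcat OneEmp q u" "pconcat OneFull q u" "pconcat (PPar p1 p2) q u"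
  "pconcat (CatA p) q u" "pconcat (CatB p1 p2) q u" "pconcat SumEmp q u" "pconcat (Inl p) q u" "pconcat (Inr p) q u"
  "pconcat StarEmp q u" "pconcat StarDone q u" "pconcat (StA p) q u" "pconcat (StB p1 p2) q u"
lemma deriv_det: "deriv p s u \<Longrightarrow> deriv p s v \<Longrightarrow> u = v"
proof (induction arbitrary: v rule: deriv.induct)
qed (blast elim: dE)+
lemma pconcat_det: "pconcat p q r1 \<Longrightarrow> pconcat p q r2 \<Longrightarrow> r1 = r2"
proof (induction arbitrary: r2 rule: pconcat.induct)
qed (blast elim: cE)+
lemma main2:
  "has_type p s \<Longrightarrow> deriv p s s' \<Longrightarrow> has_type p' s' \<Longrightarrow>
   (\<exists>p''. pconcat p p' p'' \<and> has_type p'' s \<and> (maximal p' \<longrightarrow> maximal p'') \<and>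
      (\<forall>u u'. deriv p'' s u \<longrightarrow> deriv p' s' u' \<longrightarrow> u = u'))"
proof (induction p s arbitrary: p' s' rule: has_type.induct)
  case 1 then show ?case by (auto elim!: dE htE dest: deriv_det)
next
  case 2 then show ?case by (auto elim!: dE dest: deriv_det)
next
  case 3 then show ?case by (auto elim!: dE htE dest: deriv_det)
next
  case (4 p1 s p2 t)
  from "4.prems"(1) obtain s1 t1 where d1: "deriv p1 s s1" and d2: "deriv p2 t t1" and e: "s' = Par s1 t1"
    by (auto elim: dE)
  from "4.prems"(2) e obtain q1 q2 where pq: "p' = PPar q1 q2" "has_type q1 s1" "has_type q2 t1"
    by (auto elim: htE)
  from "4.IH"(1)[OF d1 pq(2)] obtain r1 where r1: "pconcat p1 q1 r1 \<and> has_type r1 s \<and> (maximal q1 \<longrightarrow> maximal r1) \<and>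
      (\<forall>u u'. deriv r1 s u \<longrightarrow> deriv q1 s1 u' \<longrightarrow> u = u')" by blast
  from "4.IH"(2)[OF d2 pq(3)] obtain r2 where r2: "pconcat p2 q2 r2 \<and> has_type r2 t \<and> (maximal q2 \<longrightarrow> maximal r2) \<and>
      (\<forall>u u'. deriv r2 t u \<longrightarrow> deriv q2 t1 u' \<longrightarrow> u = u')" by blast
  show ?case
    apply (rule exI[of _ "PPar r1 r2"])
    using r1 r2 pq e by (auto elim!: dE mE)
next
  case (5 p s t)
  from "5.prems"(1) obtain s1 where d1: "deriv p s s1" and e: "s' = Cat s1 t"
    by (auto elim: dE)
  from "5.prems"(2) e consider (a) q where "p' = CatA q" "has_type q s1"
    | (b) q r where "p' = CatB q r" "has_type q s1" "maximal q" "has_type r t"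
    by (auto elim: htE)
  then show ?case
  proof cases
    case a
    from "5.IH"[OF d1 a(2)] obtain r1 where r1: "pconcat p q r1 \<and> has_type r1 s \<and> (maximal q \<longrightarrow> maximal r1) \<and>
      (\<forall>u u'. deriv r1 s u \<longrightarrow> deriv q s1 u' \<longrightarrow> u = u')" by blast
    show ?thesis
      apply (rule exI[of _ "CatA r1"])
      using r1 a e by (auto elim!: dE mE)
  next
    case b
    from "5.IH"[OF d1 b(2)] obtain r1 where r1: "pconcat p q r1 \<and> has_type r1 s \<and> (maximal q \<longrightarrow> maximal r1) \<and>
      (\<forall>u u'. deriv r1 s u \<longrightarrow> deriv q s1 u' \<longrightarrow> u = u')" by blast
    show ?thesis
      apply (rule exI[of _ "CatB r1 r"])
      using r1 b e by (auto elim!: dE mE dest: deriv_det)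
  qed
next
  case (6 p1 s p2 t)
  from "6.prems"(1) have d2: "deriv p2 t s'" by (auto elim: dE)
  from "6.IH"(2)[OF d2 "6.prems"(2)] obtain r where r: "pconcat p2 p' r \<and> has_type r t \<and> (maximal p' \<longrightarrow> maximal r) \<and>
      (\<forall>u u'. deriv r t u \<longrightarrow> deriv p' s' u' \<longrightarrow> u = u')" by blast
  show ?case
    apply (rule exI[of _ "CatB p1 r"])
    using r 6 by (auto elim!: dE)
next
  case 7 then show ?case by (auto elim!: dE dest: deriv_det)
next
  case (8 p s t)
  from "8.prems"(1) have d: "deriv p s s'" by (auto elim: dE)
  from "8.IH"[OF d "8.prems"(2)] obtain r where r: "pconcat p p' r \<and> has_type r s \<and> (maximal p' \<longrightarrow> maximal r) \<and>
      (\<forall>u u'. deriv r s u \<longrightarrow> deriv p' s' u' \<longrightarrow> u = u')" by blast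
  show ?case
    apply (rule exI[of _ "Inl r"])
    using r by (auto elim!: dE)
next
  case (9 p t s)
  from "9.prems"(1) have d: "deriv p t s'" by (auto elim: dE)
  from "9.IH"[OF d "9.prems"(2)] obtain r where r: "pconcat p p' r \<and> has_type r t \<and> (maximal p' \<longrightarrow> maximal r) \<and>
      (\<forall>u u'. deriv r t u \<longrightarrow> deriv p' s' u' \<longrightarrow> u = u')" by blast
  show ?case
    apply (rule exI[of _ "Inr r"])
    using r by (auto elim!: dE)
next
  case 10 then show ?case by (auto elim!: dE dest: deriv_det)
next
  case 11 then show ?case by (auto elim!: dE htE dest: deriv_det)
next
  case (12 p s)
  from "12.prems"(1) obtain s1 where d1: "deriv p s s1" and e: "s' = Cat s1 (Star s)"
    by (auto elim: dE)
  from "12.prems"(2) e consider (a) q where "p' = CatA q" "has_type q s1"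
    | (b) q r where "p' = CatB q r" "has_type q s1" "maximal q" "has_type r (Star s)"
    by (auto elim: htE)
  then show ?case
  proof cases
    case a
    from "12.IH"[OF d1 a(2)] obtain r1 where r1: "pconcat p q r1 \<and> has_type r1 s \<and> (maximal q \<longrightarrow> maximal r1) \<and>
      (\<forall>u u'. deriv r1 s u \<longrightarrow> deriv q s1 u' \<longrightarrow> u = u')" by blast
    show ?thesis
      apply (rule exI[of _ "StA r1"])
      using r1 a e by (auto elim!: dE mE)
  next
    case b
    from "12.IH"[OF d1 b(2)] obtain r1 where r1: "pconcat p q r1 \<and> has_type r1 s \<and> (maximal q \<longrightarrow> maximal r1) \<and>
      (\<forall>u u'. deriv r1 s u \<longrightarrow> deriv q s1 u' \<longrightarrow> u = u')" by blast
    show ?thesis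
      apply (rule exI[of _ "StB r1 r"])
      using r1 b e by (auto elim!: dE mE dest: deriv_det)
  qed
next
  case (13 p s p2)
  from "13.prems"(1) have d2: "deriv p2 (Star s) s'" by (auto elim: dE)
  from "13.IH"(2)[OF d2 "13.prems"(2)] obtain r where r: "pconcat p2 p' r \<and> has_type r (Star s) \<and> (maximal p' \<longrightarrow> maximal r) \<and>
      (\<forall>u u'. deriv r (Star s) u \<longrightarrow> deriv p' s' u' \<longrightarrow> u = u')" by blast
  show ?case
    apply (rule exI[of _ "StB p r"])
    using r 13 by (auto elim!: dE)
qed

theorem mainTheorem6:
  shows "(\<forall>p p' q1 q2. pconcat p p' q1 \<longrightarrow> pconcat p p' q2 \<longrightarrow> q1 = q2) \<and>
         (\<forall>p p' s s'. has_type p s \<longrightarrow> deriv p s s' \<longrightarrow> has_type p' s' \<longrightarrow>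
            (\<exists>p''. pconcat p p' p'' \<and> has_type p'' s \<and>
               (\<forall>u u'. deriv p'' s u \<longrightarrow> deriv p' s' u' \<longrightarrow> u = u')))"
proof (intro conjI allI impI)
  fix p p' q1 q2 assume "pconcat p p' q1" "pconcat p p' q2"
  then show "q1 = q2" by (rule pconcat_det)
next
  fix p p' s s' assume a: "has_type p s" "deriv p s s'" "has_type p' s'"
  from main2[OF a] show "\<exists>p''. pconcat p p' p'' \<and> has_type p'' s \<and>
               (\<forall>u u'. deriv p'' s u \<longrightarrow> deriv p' s' u' \<longrightarrow> u = u')" by blast
qed

end
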